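(* Let $E$ be a graph, $K$ a field, $c=e_1e_2\cdots e_m$ an exclusive cycle in $E$, and $\mu=c^\infty$. Let $f(x)=1+a_1x+\dots+a_nx^n$ ($n\ge 1$, $a_i\in K$) be an irreducible polynomial in $K[x,x^{-1}]$ and $K'=K[x,x^{-1}]/(f(x))$. Let $V_{[\mu]}^f$ be the Ara–Rangaswamy simple left $L_K(E)$-module described in the context. Then $\mathrm{End}_{L_K(E)}(V_{[\mu]}^f)\cong K'$.
   Context: A graph $E=(E^0,E^1,r,s)$ consists of a vertex set $E^0$, an edge set $E^1$ and range/source maps $r,s:E^1\to E^0$. For a field $F$, the Leavitt path algebra $L_F(E)$ is the free associative $F$-algebra generated by $E^0\cup E^1\cup\{e^*:e\in E^1\}$ subject to: (V) $vv'=\delta_{v,v'}v$ for $v,v'\in E^0$; (E1) $s(e)e=er(e)=e$; (E2) $r(e)e^*=e^*s(e)=e^*$; (CK1) $e^*f=\delta_{e,f}r(e)$ for $e,f\in E^1$; (CK2) $v=\sum_{s(e)=v}ee^*$ for every vertex $v$ emitting a finite nonzero number of edges. A finite path is $e_1\cdots e_n$ with $r(e_i)=s(e_{i+1})$ (vertices are paths of length 0); for a path $\gamma=e_1\cdots e_n$, $\gamma^*=e_n^*\cdots e_1^*$. A cycle is a closed path $e_1\cdots e_n$ ($s(e_1)=r(e_n)$) with $s(e_i)\neq s(e_j)$ for $i\ne j$; it is exclusive if it shares no vertex with any other cycle (other than its own rotations). An infinite path is $e_1e_2\cdots$ with $r(e_i)=s(e_{i+1})$; for $n\ge1$, $\tau_{>n}(e_1e_2\cdots)=e_{n+1}e_{n+2}\cdots$,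 $\tau_{>0}$ is the identity. Two infinite paths $\mu,\eta$ are tail-equivalent if $\tau_{>m}(\mu)=\tau_{>n}(\eta)$ for some $m,n\ge0$; $[\mu]$ is the class of $\mu$. $V_{[\mu]}$ is the vector space with basis $[\mu]$, a left $L_F(E)$-module via: $v\cdot\eta=\eta$ if $v=s(\eta)$, else $0$; $e\cdot\eta=e\eta$ if $r(e)=s(\eta)$, else $0$; $e^*\cdot\eta=\tau_{>1}(\eta)$ if $\eta=e\eta'$, else $0$. Construction of $V_{[\mu]}^f$: let $\bar x$ be the image of $x$ in the field $K'$; let $\sigma$ be the $K'$-algebra automorphism of $L_{K'}(E)$ fixing all vertices and all $e,e^*$ with $e\neq e_1$, and sending $e_1\mapsto \bar x e_1$, $e_1^*\mapsto \bar x^{-1}e_1^*$. The twisted module $V_{[\mu]}^\sigma$ is $V_{[\mu]}$ (over $L_{K'}(E)$) as a vector space with action $a\cdot m=\sigma(a)m$. $V_{[\mu]}^f$ is $V_{[\mu]}^\sigma$ regarded as an $L_K(E)$-module by restriction of scalars along $L_K(E)\subseteq L_{K'}(E)$; it is a simple $L_K(E)$-module. *)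

theory Defs
  imports "HOL-Algebra.Polynomial_Divisibility"
begin

definition is_graph :: "'v set \<Rightarrow> 'e set \<Rightarrow> ('e \<Rightarrow> 'v) \<Rightarrow> ('e \<Rightarrow> 'v) \<Rightarrow> bool" where
  "is_graph E0 E1 r s \<longleftrightarrow> (\<forall>e\<in>E1. r e \<in> E0 \<and> s e \<in> E0)"

text \<open>Infinite paths e_1 e_2 ... are functions nat => edges (index 0 is the first edge).\<close>

definition inf_path :: "'e set \<Rightarrow> ('e \<Rightarrow> 'v) \<Rightarrow> ('e \<Rightarrow> 'v) \<Rightarrow> (nat \<Rightarrow> 'e) \<Rightarrow> bool" where
  "inf_path E1 r s p \<longleftrightarrow> (\<forall>i. p i \<in> E1 \<and> r (p i) = s (p (Suc i)))"

definition tail_from :: "nat \<Rightarrow> (nat \<Rightarrow> 'e) \<Rightarrow> (nat \<Rightarrow> 'e)" where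
  "tail_from n p = (\<lambda>i. p (i + n))"

definition cons_path :: "'e \<Rightarrow> (nat \<Rightarrow> 'e) \<Rightarrow> (nat \<Rightarrow> 'e)" where
  "cons_path e p = (\<lambda>i. case i of 0 \<Rightarrow> e | Suc j \<Rightarrow> p j)"

definition tail_equiv :: "(nat \<Rightarrow> 'e) \<Rightarrow> (nat \<Rightarrow> 'e) \<Rightarrow> bool" where
  "tail_equiv p q \<longleftrightarrow> (\<exists>m n. tail_from m p = tail_from n q)"

definition tail_class :: "'e set \<Rightarrow> ('e \<Rightarrow> 'v) \<Rightarrow> ('e \<Rightarrow> 'v) \<Rightarrow> (nat \<Rightarrow> 'e) \<Rightarrow> (nat \<Rightarrow> 'e) set" where
  "tail_class E1 r s mu = {p. inf_path E1 r s p \<and> tail_equiv p mu}"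

definition is_cycle :: "'e set \<Rightarrow> ('e \<Rightarrow> 'v) \<Rightarrow> ('e \<Rightarrow> 'v) \<Rightarrow> 'e list \<Rightarrow> bool" where
  "is_cycle E1 r s c \<longleftrightarrow> c \<noteq> [] \<and> set c \<subseteq> E1
     \<and> (\<forall>i. Suc i < length c \<longrightarrow> r (c ! i) = s (c ! Suc i))
     \<and> r (last c) = s (hd c) \<and> distinct (map s c)"

text \<open>Vertices of a (closed) path: its sources (the ranges are sources as well).\<close>

definition cycle_vertices :: "('e \<Rightarrow> 'v) \<Rightarrow> 'e list \<Rightarrow> 'v set" where
  "cycle_vertices s c = s ` set c"

definition exclusive_cycle :: "'e set \<Rightarrow> ('e \<Rightarrow> 'v) \<Rightarrow> ('e \<Rightarrow> 'v) \<Rightarrow> 'e list \<Rightarrow> bool" where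
  "exclusive_cycle E1 r s c \<longleftrightarrow> is_cycle E1 r s c \<and>
     (\<forall>d. is_cycle E1 r s d \<and> cycle_vertices s d \<inter> cycle_vertices s c \<noteq> {}
          \<longrightarrow> (\<exists>k. d = rotate k c))"

definition cycle_inf :: "'e list \<Rightarrow> (nat \<Rightarrow> 'e)" where
  "cycle_inf c = (\<lambda>i. c ! (i mod length c))"

text \<open>K' is the rupture field Rupt (carrier R) f = K[X]/(f).  The image of a scalar k of K,
  and the image xbar of the variable x.\<close>

definition Kemb :: "('a, 'b) ring_scheme \<Rightarrow> 'a list \<Rightarrow> 'a \<Rightarrow> 'a list set" where
  "Kemb R f k = (PIdl\<^bsub>poly_ring R\<^esub> f) +>\<^bsub>poly_ring R\<^esub> (ring.poly_of_const R k)"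

definition xbar :: "('a, 'b) ring_scheme \<Rightarrow> 'a list \<Rightarrow> 'a list set" where
  "xbar R f = (PIdl\<^bsub>poly_ring R\<^esub> f) +>\<^bsub>poly_ring R\<^esub> X\<^bsub>R\<^esub>"

text \<open>Elements of V^f: finite K'-linear combinations of elements of [mu], i.e. finitely supported
  coefficient functions on infinite paths, supported in [mu].\<close>

definition Vcarrier :: "('k, 'm) ring_scheme \<Rightarrow> (nat \<Rightarrow> 'e) set \<Rightarrow> ((nat \<Rightarrow> 'e) \<Rightarrow> 'k) set" where
  "Vcarrier Kq P = {phi. (\<forall>p. phi p \<in> carrier Kq) \<and> (\<forall>p. p \<notin> P \<longrightarrow> phi p = \<zero>\<^bsub>Kq\<^esub>)
                        \<and> finite {p. phi p \<noteq> \<zero>\<^bsub>Kq\<^esub>}}"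

definition vadd :: "('k, 'm) ring_scheme \<Rightarrow> ((nat \<Rightarrow> 'e) \<Rightarrow> 'k) \<Rightarrow> ((nat \<Rightarrow> 'e) \<Rightarrow> 'k) \<Rightarrow> ((nat \<Rightarrow> 'e) \<Rightarrow> 'k)" where
  "vadd Kq phi psi = (\<lambda>p. phi p \<oplus>\<^bsub>Kq\<^esub> psi p)"

definition vzero :: "('k, 'm) ring_scheme \<Rightarrow> ((nat \<Rightarrow> 'e) \<Rightarrow> 'k)" where
  "vzero Kq = (\<lambda>p. \<zero>\<^bsub>Kq\<^esub>)"

definition vsmul :: "('k, 'm) ring_scheme \<Rightarrow> 'k \<Rightarrow> ((nat \<Rightarrow> 'e) \<Rightarrow> 'k) \<Rightarrow> ((nat \<Rightarrow> 'e) \<Rightarrow> 'k)" where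
  "vsmul Kq a phi = (\<lambda>p. a \<otimes>\<^bsub>Kq\<^esub> phi p)"

text \<open>Twisted actions of the generators of L_K(E) on V^f (twist sigma: e1 |-> xbar e1,
  e1^* |-> xbar^{-1} e1^*, all other generators fixed), extended K'-linearly from the basis [mu]:
  v . eta = eta if v = s(eta), e . eta = e eta if r(e) = s(eta), e^* . eta = tau_{>1}(eta)
  if eta = e eta'.\<close>

definition act_vertex :: "('k, 'm) ring_scheme \<Rightarrow> ('e \<Rightarrow> 'v) \<Rightarrow> 'v \<Rightarrow> ((nat \<Rightarrow> 'e) \<Rightarrow> 'k) \<Rightarrow> ((nat \<Rightarrow> 'e) \<Rightarrow> 'k)" where
  "act_vertex Kq s v phi = (\<lambda>p. if s (p 0) = v then phi p else \<zero>\<^bsub>Kq\<^esub>)"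

definition act_edge :: "('k, 'm) ring_scheme \<Rightarrow> ('e \<Rightarrow> 'v) \<Rightarrow> ('e \<Rightarrow> 'v) \<Rightarrow> 'e \<Rightarrow> 'k \<Rightarrow> 'e
     \<Rightarrow> ((nat \<Rightarrow> 'e) \<Rightarrow> 'k) \<Rightarrow> ((nat \<Rightarrow> 'e) \<Rightarrow> 'k)" where
  "act_edge Kq r s e1 xb e phi =
     (\<lambda>p. if p 0 = e \<and> r e = s (p 1)
          then (if e = e1 then xb else \<one>\<^bsub>Kq\<^esub>) \<otimes>\<^bsub>Kq\<^esub> phi (tail_from 1 p)
          else \<zero>\<^bsub>Kq\<^esub>)"

definition act_ghost :: "('k, 'm) ring_scheme \<Rightarrow> 'e \<Rightarrow> 'k \<Rightarrow> 'e
     \<Rightarrow> ((nat \<Rightarrow> 'e) \<Rightarrow> 'k) \<Rightarrow> ((nat \<Rightarrow> 'e) \<Rightarrow> 'k)" where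
  "act_ghost Kq e1 xb e phi =
     (\<lambda>p. (if e = e1 then inv\<^bsub>Kq\<^esub> xb else \<one>\<^bsub>Kq\<^esub>) \<otimes>\<^bsub>Kq\<^esub> phi (cons_path e p))"

text \<open>The data of V^f for the given graph, cycle c = e_1 ... e_m (e_1 = hd c), mu = c^infinity.\<close>

definition Vf_carrier where
  "Vf_carrier R E1 r s c f = Vcarrier (Rupt\<^bsub>R\<^esub> (carrier R) f) (tail_class E1 r s (cycle_inf c))"

text \<open>L_K(E)-module endomorphisms of V^f: maps V^f -> V^f which are additive, K-linear and
  commute with the action of all generators v, e, e^* (v in E0, e in E1) of L_K(E).
  (Since L_K(E) is spanned over K by products of generators, this is exactly
  End_{L_K(E)}(V^f).)  Maps are taken extensional on the carrier.\<close>

definition Vf_End where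
  "Vf_End R E0 E1 r s c f =
    (let Kq = Rupt\<^bsub>R\<^esub> (carrier R) f; V = Vf_carrier R E1 r s c f;
         e1 = hd c; xb = xbar R f in
     {h. h \<in> V \<rightarrow> V \<and> h \<in> extensional V
       \<and> (\<forall>phi\<in>V. \<forall>psi\<in>V. h (vadd Kq phi psi) = vadd Kq (h phi) (h psi))
       \<and> (\<forall>k\<in>carrier R. \<forall>phi\<in>V. h (vsmul Kq (Kemb R f k) phi) = vsmul Kq (Kemb R f k) (h phi))
       \<and> (\<forall>v\<in>E0. \<forall>phi\<in>V. h (act_vertex Kq s v phi) = act_vertex Kq s v (h phi))
       \<and> (\<forall>e\<in>E1. \<forall>phi\<in>V. h (act_edge Kq r s e1 xb e phi) = act_edge Kq r s e1 xb e (h phi))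
       \<and> (\<forall>e\<in>E1. \<forall>phi\<in>V. h (act_ghost Kq e1 xb e phi) = act_ghost Kq e1 xb e (h phi))})"

definition Vf_End_ring where
  "Vf_End_ring R E0 E1 r s c f =
    (let Kq = Rupt\<^bsub>R\<^esub> (carrier R) f; V = Vf_carrier R E1 r s c f in
     \<lparr>carrier = Vf_End R E0 E1 r s c f,
      mult = (\<lambda>g h. compose V g h),
      one = (\<lambda>phi\<in>V. phi),
      zero = (\<lambda>phi\<in>V. vzero Kq),
      add = (\<lambda>g h. \<lambda>phi\<in>V. vadd Kq (g phi) (h phi))\<rparr>)"

end

theory Submission
  imports Defs
begin

lemma tail_from_add[simp]: "tail_from m (tail_from n p) = tail_from (m+n) p"
  by (simp add: tail_from_def add.assoc)

lemma tail_from_0[simp]: "tail_from 0 p = p"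
  by (simp add: tail_from_def)

lemma tail_cons[simp]: "tail_from 1 (cons_path e p) = p"
  by (simp add: tail_from_def cons_path_def)

lemma tail_cons_Suc[simp]: "tail_from (Suc m) (cons_path e p) = tail_from m p"
  by (simp add: tail_from_def cons_path_def fun_eq_iff)

lemma cons_tail: "p 0 = e \<Longrightarrow> cons_path e (tail_from 1 p) = p"
  by (auto simp add: tail_from_def cons_path_def fun_eq_iff split: nat.split)

lemma cycle_pos: "is_cycle E1 r s c \<Longrightarrow> 0 < length c"
  by (simp add: is_cycle_def)

lemma mu_inf: assumes "is_cycle E1 r s c" shows "inf_path E1 r s (cycle_inf c)"
  unfolding inf_path_def cycle_inf_def
proof
  fix i
  let ?L = "length c"
  have L: "0 < ?L" using assms by (simp add: is_cycle_def)
  have "c ! (i mod ?L) \<in> set c" using L by simp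
  then have A: "c ! (i mod ?L) \<in> E1" using assms by (auto simp: is_cycle_def)
  have "r (c ! (i mod ?L)) = s (c ! (Suc i mod ?L))"
  proof (cases "Suc (i mod ?L) = ?L")
    case True
    then have "Suc i mod ?L = 0" by (simp add: mod_Suc)
    moreover have "c ! (i mod ?L) = last c" using True L
      by (metis diff_Suc_1 is_cycle_def assms last_conv_nth)
    moreover have "c ! 0 = hd c" using L by (simp add: hd_conv_nth)
    ultimately show ?thesis using assms by (simp add: is_cycle_def)
  next
    case False
    then have "Suc i mod ?L = Suc (i mod ?L)" by (simp add: mod_Suc)
    moreover have "Suc (i mod ?L) < ?L" using False L
      by (metis Suc_lessI mod_less_divisor)
    ultimately show ?thesis using assms by (simp add: is_cycle_def)
  qed
  then show "c ! (i mod ?L) \<in> E1 \<and> r (c ! (i mod ?L)) = s (c ! (Suc i mod ?L))" using A by simp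
qed

lemma mu_period: "cycle_inf c (i + length c * n) = cycle_inf c i"
  by (simp add: cycle_inf_def)

lemma mu_tail_period: "tail_from (length c * n) (cycle_inf c) = cycle_inf c"
  by (simp add: tail_from_def fun_eq_iff mu_period)

lemma class_to_mu:
  assumes "is_cycle E1 r s c" "p \<in> tail_class E1 r s (cycle_inf c)"
  shows "\<exists>N. tail_from N p = cycle_inf c"
proof -
  obtain m n where mn: "tail_from m p = tail_from n (cycle_inf c)"
    using assms(2) by (auto simp: tail_class_def tail_equiv_def)
  have L: "length c \<ge> 1" using assms(1) by (simp add: is_cycle_def Suc_le_eq)
  define t where "t = length c * n - n"
  have nt: "t + n = length c * n" using L unfolding t_def
    by (metis le_add_diff_inverse2 mult_le_mono1 mult_1)
  have "tail_from (t + m) p = tail_from t (tail_from m p)" by simp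
  also have "\<dots> = tail_from (t + n) (cycle_inf c)" by (simp add: mn)
  also have "\<dots> = cycle_inf c" by (simp add: nt mu_tail_period)
  finally show ?thesis by blast
qed

lemma inf_path_tail: "inf_path E1 r s p \<Longrightarrow> inf_path E1 r s (tail_from n p)"
  by (simp add: inf_path_def tail_from_def)

lemma inf_path_cons: "e \<in> E1 \<Longrightarrow> r e = s (q 0) \<Longrightarrow> inf_path E1 r s q \<Longrightarrow> inf_path E1 r s (cons_path e q)"
  by (auto simp add: inf_path_def cons_path_def split: nat.split)

lemma teq_tail: "tail_equiv p q \<Longrightarrow> tail_equiv (tail_from 1 p) q"
  unfolding tail_equiv_def
proof (elim exE)
  fix m n assume "tail_from m p = tail_from n q"
  then have "tail_from 1 (tail_from m p) = tail_from 1 (tail_from n q)" by simp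
  then have "tail_from m (tail_from 1 p) = tail_from (1+n) q" by (simp add: add.commute)
  then show "\<exists>m n. tail_from m (tail_from 1 p) = tail_from n q" by blast
qed

lemma teq_cons: "tail_equiv p q \<Longrightarrow> tail_equiv (cons_path e p) q"
  unfolding tail_equiv_def
proof (elim exE)
  fix m n assume "tail_from m p = tail_from n q"
  then have "tail_from (Suc m) (cons_path e p) = tail_from n q" by simp
  then show "\<exists>m n. tail_from m (cons_path e p) = tail_from n q" by blast
qed

lemma class_tail: "p \<in> tail_class E1 r s mu \<Longrightarrow> tail_from 1 p \<in> tail_class E1 r s mu"
  using teq_tail[of p mu] inf_path_tail[of E1 r s p 1] by (simp add: tail_class_def)

lemma class_cons_rev: "cons_path e p \<in> tail_class E1 r s mu \<Longrightarrow> p \<in> tail_class E1 r s mu"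
  using class_tail[of "cons_path e p"] by simp

lemma class_cons: "p \<in> tail_class E1 r s mu \<Longrightarrow> e \<in> E1 \<Longrightarrow> r e = s (p 0) \<Longrightarrow> cons_path e p \<in> tail_class E1 r s mu"
  by (simp add: tail_class_def inf_path_cons teq_cons)

lemma class_inf: "p \<in> tail_class E1 r s mu \<Longrightarrow> r (p 0) = s (p 1)"
  by (simp add: tail_class_def inf_path_def)

lemma class_E1: "p \<in> tail_class E1 r s mu \<Longrightarrow> p i \<in> E1"
  by (simp add: tail_class_def inf_path_def)

locale vf = field K for K (structure) +
  fixes E0 :: "'v set" and E1 :: "'e set" and r s :: "'e \<Rightarrow> 'v" and c :: "'e list"
    and xb :: 'a and Ks :: "'a set"
  assumes cyc: "is_cycle E1 r s c"
    and xb: "xb \<in> carrier K" "xb \<noteq> \<zero>"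
    and Ks: "Ks \<subseteq> carrier K"
    and gen: "\<And>Q a. \<lbrakk>\<And>k. k \<in> Ks \<Longrightarrow> Q k; Q xb; Q \<zero>; Q \<one>;
       \<And>a b. a \<in> carrier K \<Longrightarrow> b \<in> carrier K \<Longrightarrow> Q a \<Longrightarrow> Q b \<Longrightarrow> Q (a \<oplus> b);
       \<And>a b. a \<in> carrier K \<Longrightarrow> b \<in> carrier K \<Longrightarrow> Q a \<Longrightarrow> Q b \<Longrightarrow> Q (a \<otimes> b);
       a \<in> carrier K\<rbrakk> \<Longrightarrow> Q a"
begin

abbreviation "mu \<equiv> cycle_inf c"
abbreviation "PP \<equiv> tail_class E1 r s mu"
abbreviation "VV \<equiv> Vcarrier K PP"
abbreviation "e1 \<equiv> hd c"
abbreviation "EE \<equiv> act_edge K r s e1 xb"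
abbreviation "GH \<equiv> act_ghost K e1 xb"

definition isEnd where
  "isEnd h \<longleftrightarrow> h \<in> VV \<rightarrow> VV \<and> h \<in> extensional VV
       \<and> (\<forall>phi\<in>VV. \<forall>psi\<in>VV. h (vadd K phi psi) = vadd K (h phi) (h psi))
       \<and> (\<forall>k\<in>Ks. \<forall>phi\<in>VV. h (vsmul K k phi) = vsmul K k (h phi))
       \<and> (\<forall>v\<in>E0. \<forall>phi\<in>VV. h (act_vertex K s v phi) = act_vertex K s v (h phi))
       \<and> (\<forall>e\<in>E1. \<forall>phi\<in>VV. h (EE e phi) = EE e (h phi))
       \<and> (\<forall>e\<in>E1. \<forall>phi\<in>VV. h (GH e phi) = GH e (h phi))"

definition sing where "sing a = (\<lambda>q. if q = mu then a else \<zero>)"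

lemma ixb: "inv xb \<in> carrier K" "xb \<otimes> inv xb = \<one>" "inv xb \<otimes> xb = \<one>" "inv xb \<in> Units K"
  using xb field_Units by auto

lemma VD: assumes "phi \<in> VV"
  shows "phi p \<in> carrier K" "p \<notin> PP \<Longrightarrow> phi p = \<zero>" "finite {p. phi p \<noteq> \<zero>}"
  using assms by (auto simp: Vcarrier_def)

lemma VI: "(\<And>p. phi p \<in> carrier K) \<Longrightarrow> (\<And>p. p \<notin> PP \<Longrightarrow> phi p = \<zero>) \<Longrightarrow> finite {p. phi p \<noteq> \<zero>} \<Longrightarrow> phi \<in> VV"
  by (auto simp: Vcarrier_def)

lemma mu_PP: "mu \<in> PP"
  using mu_inf[OF cyc] by (auto simp: tail_class_def tail_equiv_def)

lemma V_sing: "a \<in> carrier K \<Longrightarrow> sing a \<in> VV"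
  by (rule VI) (auto simp: sing_def mu_PP)

lemma V_vadd: "phi \<in> VV \<Longrightarrow> psi \<in> VV \<Longrightarrow> vadd K phi psi \<in> VV"
  apply (rule VI)
    apply (auto simp: vadd_def VD)
  apply (rule finite_subset[of _ "{p. phi p \<noteq> \<zero>} \<union> {p. psi p \<noteq> \<zero>}"])
   apply (auto simp: VD)
  done

lemma V_vsmul: "a \<in> carrier K \<Longrightarrow> phi \<in> VV \<Longrightarrow> vsmul K a phi \<in> VV"
  apply (rule VI)
    apply (auto simp: vsmul_def VD)
  apply (rule finite_subset[of _ "{p. phi p \<noteq> \<zero>}"])
   apply (auto simp: VD)
  done

lemma V_vertex: "phi \<in> VV \<Longrightarrow> act_vertex K s v phi \<in> VV"
  apply (rule VI)
    apply (auto simp: act_vertex_def VD)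
  apply (rule finite_subset[of _ "{p. phi p \<noteq> \<zero>}"])
   apply (auto simp: VD)
  done

lemma coef_c: "(if e = e1 then xb else \<one>) \<in> carrier K" "(if e = e1 then inv xb else \<one>) \<in> carrier K"
  using xb ixb by auto

lemma V_edge: assumes "e \<in> E1" "phi \<in> VV" shows "EE e phi \<in> VV"
proof (rule VI)
  fix p show "EE e phi p \<in> carrier K"
    using assms coef_c by (auto simp: act_edge_def VD)
next
  fix p assume p: "p \<notin> PP"
  show "EE e phi p = \<zero>"
  proof (cases "p 0 = e \<and> r e = s (p 1)")
    case True
    have "tail_from 1 p \<notin> PP"
    proof
      assume "tail_from 1 p \<in> PP"
      then have "cons_path e (tail_from 1 p) \<in> PP"
        using class_cons[of "tail_from 1 p" E1 r s mu e] True assms(1)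
        by (simp add: tail_from_def)
      then show False using p cons_tail[of p e] True by simp
    qed
    then show ?thesis using True assms coef_c by (simp add: act_edge_def VD)
  qed (auto simp add: act_edge_def)
next
  show "finite {p. EE e phi p \<noteq> \<zero>}"
  proof (rule finite_subset)
    show "{p. EE e phi p \<noteq> \<zero>} \<subseteq> cons_path e ` {p. phi p \<noteq> \<zero>}"
    proof
      fix p assume "p \<in> {p. EE e phi p \<noteq> \<zero>}"
      then have A: "p 0 = e" "phi (tail_from 1 p) \<noteq> \<zero>"
        using xb by (auto simp: act_edge_def split: if_splits)
      then show "p \<in> cons_path e ` {p. phi p \<noteq> \<zero>}"
        using cons_tail[of p e] by (metis (mono_tags, lifting) image_eqI mem_Collect_eq)
    qed
  qed (use assms VD in auto)
qed

lemma V_ghost: assumes "phi \<in> VV" shows "GH e phi \<in> VV"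
proof (rule VI)
  fix p show "GH e phi p \<in> carrier K"
    using assms coef_c by (auto simp: act_ghost_def VD)
next
  fix p assume p: "p \<notin> PP"
  then have "cons_path e p \<notin> PP" using class_cons_rev[of e p E1 r s mu] by blast
  then show "GH e phi p = \<zero>" using assms coef_c by (simp add: act_ghost_def VD)
next
  show "finite {p. GH e phi p \<noteq> \<zero>}"
  proof (rule finite_subset)
    show "{p. GH e phi p \<noteq> \<zero>} \<subseteq> tail_from 1 ` {p. phi p \<noteq> \<zero>}"
    proof
      fix p assume "p \<in> {p. GH e phi p \<noteq> \<zero>}"
      then have A: "phi (cons_path e p) \<noteq> \<zero>"
        using ixb by (auto simp: act_ghost_def split: if_splits)
      then show "p \<in> tail_from 1 ` {p. phi p \<noteq> \<zero>}"
        by (metis (mono_tags, lifting) image_eqI mem_Collect_eq tail_cons)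
    qed
  qed (use assms VD in auto)
qed

end

context vf begin

lemma mu_E1: "mu i \<in> E1" and mu_rs: "r (mu i) = s (mu (Suc i))"
  using mu_inf[OF cyc] by (auto simp: inf_path_def)

definition Ops :: "nat \<Rightarrow> nat \<Rightarrow> ((nat \<Rightarrow> 'e) \<Rightarrow> 'a) \<Rightarrow> ((nat \<Rightarrow> 'e) \<Rightarrow> 'a)" where
  "Ops j n psi = (\<lambda>q. if (\<forall>i<n. q i = mu (j+i)) then psi q else \<zero>)"

lemma V_Ops: "psi \<in> VV \<Longrightarrow> Ops j n psi \<in> VV"
  apply (rule VI)
    apply (auto simp: Ops_def VD)
  apply (rule finite_subset[of _ "{p. psi p \<noteq> \<zero>}"])
   apply (auto simp: VD)
  done

lemma Ops_rec: assumes psi: "psi \<in> VV"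
  shows "Ops j (Suc n) psi = EE (mu j) (Ops (Suc j) n (GH (mu j) psi))"
proof (rule ext)
  fix q
  show "Ops j (Suc n) psi q = EE (mu j) (Ops (Suc j) n (GH (mu j) psi)) q"
  proof (cases "q 0 = mu j")
    case False
    then show ?thesis by (auto simp: Ops_def act_edge_def)
  next
    case True
    have ct: "cons_path (mu j) (tail_from 1 q) = q" using cons_tail[of q "mu j"] True by simp
    have eqv: "(\<forall>i<Suc n. q i = mu (j+i)) \<longleftrightarrow> (\<forall>i<n. tail_from 1 q i = mu (Suc j + i))"
      using True by (simp add: tail_from_def All_less_Suc2)
    show ?thesis
    proof (cases "psi q = \<zero>")
      case True
      then show ?thesis using ct coef_c by (auto simp: Ops_def act_edge_def act_ghost_def)
    next
      case False
      then have "q \<in> PP" using VD(2)[OF psi] by blast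
      then have rs: "r (q 0) = s (q 1)" by (rule class_inf)
      have pc: "psi q \<in> carrier K" using VD(1)[OF psi] .
      have cc: "(if mu j = e1 then xb else \<one>) \<otimes> ((if mu j = e1 then inv xb else \<one>) \<otimes> psi q) = psi q"
        using ixb xb pc by (simp add: m_assoc[symmetric])
      show ?thesis
        using eqv ct rs True cc xb by (auto simp add: Ops_def act_edge_def act_ghost_def)
    qed
  qed
qed

lemma isEndD: assumes "isEnd h"
  shows "\<And>phi. phi \<in> VV \<Longrightarrow> h phi \<in> VV"
    and "\<And>phi. phi \<notin> VV \<Longrightarrow> h phi = undefined"
    and "\<And>phi psi. phi \<in> VV \<Longrightarrow> psi \<in> VV \<Longrightarrow> h (vadd K phi psi) = vadd K (h phi) (h psi)"
    and "\<And>k phi. k \<in> Ks \<Longrightarrow> phi \<in> VV \<Longrightarrow> h (vsmul K k phi) = vsmul K k (h phi)"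
    and "\<And>e phi. e \<in> E1 \<Longrightarrow> phi \<in> VV \<Longrightarrow> h (EE e phi) = EE e (h phi)"
    and "\<And>e phi. e \<in> E1 \<Longrightarrow> phi \<in> VV \<Longrightarrow> h (GH e phi) = GH e (h phi)"
  using assms unfolding isEnd_def extensional_def by auto

lemma Ops_comm: assumes h: "isEnd h"
  shows "psi \<in> VV \<Longrightarrow> h (Ops j n psi) = Ops j n (h psi)"
proof (induction n arbitrary: j psi)
  case 0
  then show ?case by (simp add: Ops_def)
next
  case (Suc n)
  have g: "GH (mu j) psi \<in> VV" using V_ghost Suc.prems by blast
  have hp: "h psi \<in> VV" using isEndD(1)[OF h] Suc.prems .
  have "h (Ops j (Suc n) psi) = h (EE (mu j) (Ops (Suc j) n (GH (mu j) psi)))"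
    using Ops_rec[OF Suc.prems] by simp
  also have "\<dots> = EE (mu j) (h (Ops (Suc j) n (GH (mu j) psi)))"
    using isEndD(5)[OF h mu_E1 V_Ops[OF g]] .
  also have "\<dots> = EE (mu j) (Ops (Suc j) n (h (GH (mu j) psi)))"
    using Suc.IH[OF g] by simp
  also have "\<dots> = EE (mu j) (Ops (Suc j) n (GH (mu j) (h psi)))"
    using isEndD(6)[OF h mu_E1 Suc.prems] by simp
  also have "\<dots> = Ops j (Suc n) (h psi)"
    using Ops_rec[OF hp] by simp
  finally show ?case .
qed

lemma Ops_fin: assumes psi: "psi \<in> VV" shows "\<exists>n. Ops 0 n psi = sing (psi mu)"
proof -
  define S where "S = {q. psi q \<noteq> \<zero>} - {mu}"
  have fS: "finite S" using VD(3)[OF psi] unfolding S_def by auto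
  define d where "d q = (SOME i. q i \<noteq> mu i)" for q :: "nat \<Rightarrow> 'e"
  have dq: "q (d q) \<noteq> mu (d q)" if "q \<in> S" for q
  proof -
    have "q \<noteq> mu" using that by (auto simp: S_def)
    then have "\<exists>i. q i \<noteq> mu i" by (auto simp: fun_eq_iff)
    then show ?thesis unfolding d_def by (rule someI_ex)
  qed
  define n where "n = Suc (Max (insert 0 (d ` S)))"
  have dn: "d q < n" if "q \<in> S" for q
  proof -
    have "d q \<le> Max (insert 0 (d ` S))" using fS that by (intro Max_ge) auto
    then show ?thesis unfolding n_def by simp
  qed
  have "Ops 0 n psi = sing (psi mu)"
  proof (rule ext)
    fix q show "Ops 0 n psi q = sing (psi mu) q"
    proof (cases "q = mu")
      case True then show ?thesis by (simp add: Ops_def sing_def)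
    next
      case False
      show ?thesis
      proof (cases "psi q = \<zero>")
        case True then show ?thesis using False by (simp add: Ops_def sing_def)
      next
        case nz: False
        then have "q \<in> S" using False by (simp add: S_def)
        then have "\<not> (\<forall>i<n. q i = mu (0+i))" using dq dn by force
        then show ?thesis using False by (auto simp add: Ops_def sing_def)
      qed
    qed
  qed
  then show ?thesis by blast
qed

lemma at_mu: assumes h: "isEnd h" and psi: "psi \<in> VV"
  shows "h psi mu = h (sing (psi mu)) mu"
proof -
  obtain n where n: "Ops 0 n psi = sing (psi mu)" using Ops_fin[OF psi] by blast
  have "h (sing (psi mu)) mu = Ops 0 n (h psi) mu"
    using Ops_comm[OF h psi, of 0 n] n by simp
  also have "\<dots> = h psi mu" by (simp add: Ops_def)
  finally show ?thesis by simp
qed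

end

context vf begin

primrec GG :: "(nat \<Rightarrow> 'e) \<Rightarrow> nat \<Rightarrow> ((nat \<Rightarrow> 'e) \<Rightarrow> 'a) \<Rightarrow> ((nat \<Rightarrow> 'e) \<Rightarrow> 'a)" where
  "GG p 0 psi = psi"
| "GG p (Suc N) psi = GH (p N) (GG p N psi)"

primrec cf :: "(nat \<Rightarrow> 'e) \<Rightarrow> nat \<Rightarrow> 'a" where
  "cf p 0 = \<one>"
| "cf p (Suc N) = (if p N = e1 then inv xb else \<one>) \<otimes> cf p N"

definition app :: "nat \<Rightarrow> (nat \<Rightarrow> 'e) \<Rightarrow> (nat \<Rightarrow> 'e) \<Rightarrow> (nat \<Rightarrow> 'e)" where
  "app N p q = (\<lambda>i. if i < N then p i else q (i - N))"

lemma app_cons: "app N p (cons_path (p N) q) = app (Suc N) p q"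
proof (rule ext)
  fix i
  show "app N p (cons_path (p N) q) i = app (Suc N) p q i"
  proof (cases "i < N")
    case True then show ?thesis by (simp add: app_def)
  next
    case False
    then show ?thesis
    proof (cases "i = N")
      case True then show ?thesis by (simp add: app_def cons_path_def)
    next
      case False
      with \<open>\<not> i < N\<close> obtain j where "i - N = Suc j" "i - Suc N = j"
        by (metis Suc_diff_Suc diff_Suc_1 linorder_neqE_nat)
      then show ?thesis using \<open>\<not> i < N\<close> False by (simp add: app_def cons_path_def)
    qed
  qed
qed

lemma cf_Units: "cf p N \<in> Units K"
proof (induction N)
  case 0 then show ?case by simp
next
  case (Suc N)
  have "(if p N = e1 then inv xb else \<one>) \<in> Units K" using ixb by simp
  then show ?case using Suc by simp
qed

lemma cf_c: "cf p N \<in> carrier K" using cf_Units by blast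

lemma GG_val: assumes "\<And>q. psi q \<in> carrier K"
  shows "GG p N psi q = cf p N \<otimes> psi (app N p q)"
proof (induction N arbitrary: q)
  case 0 then show ?case using assms by (simp add: app_def)
next
  case (Suc N)
  have "GG p (Suc N) psi q = (if p N = e1 then inv xb else \<one>) \<otimes> GG p N psi (cons_path (p N) q)"
    by (simp add: act_ghost_def)
  also have "\<dots> = (if p N = e1 then inv xb else \<one>) \<otimes> (cf p N \<otimes> psi (app (Suc N) p q))"
    using Suc app_cons by simp
  also have "\<dots> = cf p (Suc N) \<otimes> psi (app (Suc N) p q)"
    using coef_c cf_c assms by (simp add: m_assoc)
  finally show ?case .
qed

lemma V_GG: "psi \<in> VV \<Longrightarrow> GG p N psi \<in> VV"
  by (induction N) (auto intro: V_ghost)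

lemma GG_comm: assumes h: "isEnd h" and p: "\<And>i. p i \<in> E1"
  shows "psi \<in> VV \<Longrightarrow> h (GG p N psi) = GG p N (h psi)"
proof (induction N)
  case 0 then show ?case by simp
next
  case (Suc N)
  then show ?case using isEndD(6)[OF h p V_GG[OF Suc.prems]] by simp
qed

lemma app_self: "tail_from N p = mu \<Longrightarrow> app N p mu = p"
proof (rule ext)
  fix i assume t: "tail_from N p = mu"
  show "app N p mu i = p i"
  proof (cases "i < N")
    case False
    have "p (i - N + N) = mu (i - N)" using fun_cong[OF t, of "i - N"] by (simp add: tail_from_def)
    then have "mu (i - N) = p i" using False by simp
    then show ?thesis using False by (simp add: app_def)
  qed (simp add: app_def)
qed

abbreviation "LL \<equiv> length c"

lemma LL_pos: "0 < LL" using cycle_pos[OF cyc] .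

lemma mu_shift: "mu (i + LL) = mu i"
  using mu_period[of c i 1] by simp

lemma app_mu: "app LL mu q = mu \<longleftrightarrow> q = mu"
proof
  assume a: "app LL mu q = mu"
  show "q = mu"
  proof (rule ext)
    fix j
    have "q j = app LL mu q (j + LL)" by (simp add: app_def)
    also have "\<dots> = mu j" using a mu_shift by simp
    finally show "q j = mu j" .
  qed
next
  assume "q = mu"
  moreover have "tail_from LL mu = mu"
    using mu_tail_period[of c 1] by simp
  ultimately show "app LL mu q = mu" using app_self by simp
qed

lemma mu_nth: "i < LL \<Longrightarrow> mu i = c ! i"
  by (simp add: cycle_inf_def)

lemma cf_mu: "0 < N \<Longrightarrow> N \<le> LL \<Longrightarrow> cf mu N = inv xb"
proof (induction N)
  case 0 then show ?case by simp
next
  case (Suc N)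
  have dc: "distinct c" using cyc by (auto simp: is_cycle_def distinct_map)
  have h0: "hd c = c ! 0" using LL_pos by (simp add: hd_conv_nth)
  show ?case
  proof (cases "N = 0")
    case True
    then show ?thesis using mu_nth[of 0] LL_pos h0 ixb by simp
  next
    case False
    have NL: "N < LL" using Suc.prems by simp
    have "c ! N \<noteq> c ! 0" using nth_eq_iff_index_eq[OF dc NL LL_pos] False by simp
    then have "mu N \<noteq> e1" using mu_nth[of N] Suc.prems h0 by simp
    then show ?thesis using Suc False ixb by simp
  qed
qed

definition FF where "FF h a = h (sing a) mu"

lemma FF_c: "isEnd h \<Longrightarrow> a \<in> carrier K \<Longrightarrow> FF h a \<in> carrier K"
  unfolding FF_def using isEndD(1) V_sing VD(1) by blast

lemma sing_c: "sing a q \<in> carrier K" if "a \<in> carrier K"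
  using that by (simp add: sing_def)

lemma FF_add: assumes h: "isEnd h" and "a \<in> carrier K" "b \<in> carrier K"
  shows "FF h (a \<oplus> b) = FF h a \<oplus> FF h b"
proof -
  have "sing (a \<oplus> b) = vadd K (sing a) (sing b)"
    by (simp add: sing_def vadd_def fun_eq_iff)
  then show ?thesis using isEndD(3)[OF h V_sing V_sing] assms
    by (simp add: FF_def vadd_def)
qed

lemma FF_Ks: assumes h: "isEnd h" and "k \<in> Ks" "a \<in> carrier K"
  shows "FF h (k \<otimes> a) = k \<otimes> FF h a"
proof -
  have k: "k \<in> carrier K" using assms Ks by blast
  have "sing (k \<otimes> a) = vsmul K k (sing a)"
    using k by (simp add: sing_def vsmul_def fun_eq_iff)
  then show ?thesis using isEndD(4)[OF h assms(2) V_sing] assms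
    by (simp add: FF_def vsmul_def)
qed

lemma FF_inv: assumes h: "isEnd h" and a: "a \<in> carrier K"
  shows "FF h (inv xb \<otimes> a) = inv xb \<otimes> FF h a"
proof -
  have cfm: "cf mu LL = inv xb" using cf_mu LL_pos by simp
  have "GG mu LL (sing a) = sing (inv xb \<otimes> a)"
  proof (rule ext)
    fix q
    show "GG mu LL (sing a) q = sing (inv xb \<otimes> a) q"
      using GG_val[of "sing a", OF sing_c[OF a]] cfm app_mu ixb
      by (simp add: sing_def)
  qed
  then have "h (sing (inv xb \<otimes> a)) = GG mu LL (h (sing a))"
    using GG_comm[OF h _ V_sing[OF a], of mu LL] mu_E1 by simp
  moreover have "\<And>q. h (sing a) q \<in> carrier K" using isEndD(1)[OF h V_sing[OF a]] VD(1) by blast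
  then have "GG mu LL (h (sing a)) mu = cf mu LL \<otimes> h (sing a) (app LL mu mu)"
    by (rule GG_val)
  moreover have "app LL mu mu = mu" using app_mu by blast
  moreover note \<open>h (sing (inv xb \<otimes> a)) = GG mu LL (h (sing a))\<close>
  ultimately have "h (sing (inv xb \<otimes> a)) mu = inv xb \<otimes> h (sing a) mu"
    using cfm by simp
  then show ?thesis by (simp add: FF_def)
qed

lemma FF_xb: assumes h: "isEnd h" and a: "a \<in> carrier K"
  shows "FF h (xb \<otimes> a) = xb \<otimes> FF h a"
proof -
  have xa: "xb \<otimes> a \<in> carrier K" using xb a by simp
  have "FF h a = FF h (inv xb \<otimes> (xb \<otimes> a))"
    using ixb xb a by (simp add: m_assoc[symmetric])
  also have "\<dots> = inv xb \<otimes> FF h (xb \<otimes> a)" using FF_inv[OF h xa] .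
  finally have "xb \<otimes> FF h a = xb \<otimes> (inv xb \<otimes> FF h (xb \<otimes> a))" by simp
  also have "\<dots> = FF h (xb \<otimes> a)"
    using ixb xb FF_c[OF h xa] by (simp add: m_assoc[symmetric])
  finally show ?thesis by simp
qed

lemma FF_zero: assumes h: "isEnd h" shows "FF h \<zero> = \<zero>"
proof -
  have z: "FF h \<zero> \<in> carrier K" using FF_c[OF h] by simp
  have "FF h \<zero> = FF h \<zero> \<oplus> FF h \<zero>" using FF_add[OF h, of \<zero> \<zero>] by simp
  then show ?thesis using z by (metis add.r_cancel_one' zero_closed)
qed

lemma FF_mult: assumes h: "isEnd h" and a: "a \<in> carrier K"
  shows "\<forall>y\<in>carrier K. FF h (a \<otimes> y) = a \<otimes> FF h y"
proof -
  let ?Q = "\<lambda>a. \<forall>y\<in>carrier K. FF h (a \<otimes> y) = a \<otimes> FF h y"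
  show ?thesis
  proof (rule gen[of ?Q a])
    fix k assume "k \<in> Ks" then show "?Q k" using FF_Ks[OF h] by blast
  next
    show "?Q xb" using FF_xb[OF h] by blast
  next
    show "?Q \<zero>" using FF_zero[OF h] FF_c[OF h] by simp
  next
    show "?Q \<one>" using FF_c[OF h] by simp
  next
    fix a b assume ab: "a \<in> carrier K" "b \<in> carrier K" "?Q a" "?Q b"
    show "?Q (a \<oplus> b)"
    proof
      fix y assume y: "y \<in> carrier K"
      have "FF h ((a \<oplus> b) \<otimes> y) = FF h (a \<otimes> y \<oplus> b \<otimes> y)" using ab y by (simp add: l_distr)
      also have "\<dots> = FF h (a \<otimes> y) \<oplus> FF h (b \<otimes> y)" using FF_add[OF h] ab y by simp
      also have "\<dots> = (a \<oplus> b) \<otimes> FF h y" using ab y FF_c[OF h y] by (simp add: l_distr)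
      finally show "FF h ((a \<oplus> b) \<otimes> y) = (a \<oplus> b) \<otimes> FF h y" .
    qed
  next
    fix a b assume ab: "a \<in> carrier K" "b \<in> carrier K" "?Q a" "?Q b"
    show "?Q (a \<otimes> b)"
    proof
      fix y assume y: "y \<in> carrier K"
      have "FF h ((a \<otimes> b) \<otimes> y) = FF h (a \<otimes> (b \<otimes> y))" using ab y by (simp add: m_assoc)
      also have "\<dots> = a \<otimes> (b \<otimes> FF h y)" using ab y by simp
      also have "\<dots> = (a \<otimes> b) \<otimes> FF h y" using ab y FF_c[OF h y] by (simp add: m_assoc)
      finally show "FF h ((a \<otimes> b) \<otimes> y) = (a \<otimes> b) \<otimes> FF h y" .
    qed
  qed (rule a)
qed

lemma FF_lin: assumes h: "isEnd h" and a: "a \<in> carrier K"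
  shows "FF h a = a \<otimes> FF h \<one>"
  using FF_mult[OF h a] a by (metis one_closed r_one)

lemma core_pt: assumes h: "isEnd h" and psi: "psi \<in> VV"
  shows "h psi p = FF h \<one> \<otimes> psi p"
proof (cases "p \<in> PP")
  case False
  then show ?thesis using VD(2)[OF psi] VD(2)[OF isEndD(1)[OF h psi]] FF_c[OF h] by simp
next
  case True
  obtain N where N: "tail_from N p = mu" using class_to_mu[OF cyc True] by blast
  have pE: "\<And>i. p i \<in> E1" using class_E1[OF True] .
  have hp: "h psi \<in> VV" using isEndD(1)[OF h psi] .
  have gv: "GG p N psi \<in> VV" using V_GG[OF psi] .
  have pc: "psi p \<in> carrier K" using VD(1)[OF psi] .
  have "cf p N \<otimes> h psi p = GG p N (h psi) mu"
    using GG_val[of "h psi" p N mu] VD(1)[OF hp] app_self[OF N] by simp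
  also have "\<dots> = h (GG p N psi) mu" using GG_comm[OF h pE psi] by simp
  also have "\<dots> = FF h (GG p N psi mu)" using at_mu[OF h gv] by (simp add: FF_def)
  also have "\<dots> = FF h (cf p N \<otimes> psi p)"
    using GG_val[of psi p N mu] VD(1)[OF psi] app_self[OF N] by simp
  also have "\<dots> = (cf p N \<otimes> psi p) \<otimes> FF h \<one>"
    by (rule FF_lin[OF h]) (use cf_c pc in simp)
  also have "\<dots> = cf p N \<otimes> (FF h \<one> \<otimes> psi p)"
    using cf_c pc FF_c[OF h one_closed] by (simp add: m_ac)
  finally have "cf p N \<otimes> h psi p = cf p N \<otimes> (FF h \<one> \<otimes> psi p)" .
  then show ?thesis
    using Units_l_cancel[OF cf_Units] VD(1)[OF hp] pc FF_c[OF h one_closed] by simp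
qed

end

context vf begin

definition MM where "MM a = restrict (vsmul K a) VV"

lemma core: assumes h: "isEnd h" shows "h = MM (FF h \<one>)"
proof (rule ext)
  fix psi
  show "h psi = MM (FF h \<one>) psi"
  proof (cases "psi \<in> VV")
    case True
    then show ?thesis using core_pt[OF h True] by (simp add: MM_def vsmul_def fun_eq_iff)
  next
    case False
    then show ?thesis using isEndD(2)[OF h False] by (simp add: MM_def)
  qed
qed

lemma MM_End: assumes a: "a \<in> carrier K" shows "isEnd (MM a)"
  unfolding isEnd_def
proof (intro conjI ballI)
  show "MM a \<in> VV \<rightarrow> VV" using V_vsmul[OF a] by (simp add: MM_def)
  show "MM a \<in> extensional VV" by (simp add: MM_def)
next
  fix phi psi assume p: "phi \<in> VV" "psi \<in> VV"
  show "MM a (vadd K phi psi) = vadd K (MM a phi) (MM a psi)"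
    using p V_vadd[OF p] a VD(1)[OF p(1)] VD(1)[OF p(2)]
    by (simp add: MM_def vsmul_def vadd_def fun_eq_iff r_distr)
next
  fix k phi assume p: "k \<in> Ks" "phi \<in> VV"
  have k: "k \<in> carrier K" using p Ks by blast
  show "MM a (vsmul K k phi) = vsmul K k (MM a phi)"
    using p V_vsmul[OF k p(2)] a k VD(1)[OF p(2)]
    by (simp add: MM_def vsmul_def fun_eq_iff m_lcomm)
next
  fix v phi assume p: "v \<in> E0" "phi \<in> VV"
  show "MM a (act_vertex K s v phi) = act_vertex K s v (MM a phi)"
    using p V_vertex[OF p(2)] a
    by (simp add: MM_def vsmul_def act_vertex_def fun_eq_iff)
next
  fix e phi assume p: "e \<in> E1" "phi \<in> VV"
  show "MM a (EE e phi) = EE e (MM a phi)"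
    using p V_edge[OF p] a VD(1)[OF p(2)] coef_c xb
    by (auto simp add: MM_def vsmul_def act_edge_def fun_eq_iff m_lcomm)
next
  fix e phi assume p: "e \<in> E1" "phi \<in> VV"
  show "MM a (GH e phi) = GH e (MM a phi)"
    using p V_ghost[OF p(2)] a VD(1)[OF p(2)] coef_c
    by (simp add: MM_def vsmul_def act_ghost_def fun_eq_iff m_lcomm)
qed

lemma FF_MM: "a \<in> carrier K \<Longrightarrow> FF (MM a) \<one> = a"
  using V_sing[OF one_closed] by (simp add: FF_def MM_def vsmul_def sing_def)

definition EndR where
  "EndR = \<lparr>carrier = {h. isEnd h}, mult = (\<lambda>g h. compose VV g h), one = (\<lambda>phi\<in>VV. phi),
           zero = (\<lambda>phi\<in>VV. vzero K), add = (\<lambda>g h. \<lambda>phi\<in>VV. vadd K (g phi) (h phi))\<rparr>"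

lemma EndR_iso: "(\<lambda>h. FF h \<one>) \<in> ring_iso EndR K"
proof -
  have s1: "sing \<one> \<in> VV" using V_sing by simp
  have hom: "(\<lambda>h. FF h \<one>) \<in> ring_hom EndR K"
  proof (rule ring_hom_memI)
    fix h assume "h \<in> carrier EndR"
    then show "FF h \<one> \<in> carrier K" using FF_c by (simp add: EndR_def)
  next
    fix g h assume gh: "g \<in> carrier EndR" "h \<in> carrier EndR"
    then have e: "isEnd g" "isEnd h" by (auto simp: EndR_def)
    have "FF (g \<otimes>\<^bsub>EndR\<^esub> h) \<one> = g (h (sing \<one>)) mu"
      using s1 by (simp add: EndR_def FF_def compose_def)
    also have "\<dots> = FF g \<one> \<otimes> (FF h \<one> \<otimes> \<one>)"
    proof -
      have s2: "vsmul K (FF h \<one>) (sing \<one>) \<in> VV" using V_vsmul[OF FF_c[OF e(2) one_closed] s1] .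
      have h1: "h (sing \<one>) = vsmul K (FF h \<one>) (sing \<one>)"
        using fun_cong[OF core[OF e(2)], of "sing \<one>"] s1 by (simp add: MM_def)
      have g1: "g (vsmul K (FF h \<one>) (sing \<one>)) = vsmul K (FF g \<one>) (vsmul K (FF h \<one>) (sing \<one>))"
        using fun_cong[OF core[OF e(1)], of "vsmul K (FF h \<one>) (sing \<one>)"] s2 by (simp add: MM_def)
      show ?thesis using h1 g1 by (simp add: vsmul_def sing_def)
    qed
    finally show "FF (g \<otimes>\<^bsub>EndR\<^esub> h) \<one> = FF g \<one> \<otimes> FF h \<one>"
      using FF_c[OF e(2) one_closed] by simp
  next
    fix g h assume gh: "g \<in> carrier EndR" "h \<in> carrier EndR"
    show "FF (g \<oplus>\<^bsub>EndR\<^esub> h) \<one> = FF g \<one> \<oplus> FF h \<one>"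
      using s1 by (simp add: EndR_def FF_def vadd_def)
  next
    show "FF \<one>\<^bsub>EndR\<^esub> \<one> = \<one>"
      using s1 by (simp add: EndR_def FF_def sing_def)
  qed
  have bij: "bij_betw (\<lambda>h. FF h \<one>) (carrier EndR) (carrier K)"
  proof (rule bij_betwI')
    fix g h assume "g \<in> carrier EndR" "h \<in> carrier EndR"
    then have e: "isEnd g" "isEnd h" by (auto simp: EndR_def)
    show "(FF g \<one> = FF h \<one>) = (g = h)"
      using core[OF e(1)] core[OF e(2)] by metis
  next
    fix h assume "h \<in> carrier EndR"
    then show "FF h \<one> \<in> carrier K" using FF_c by (simp add: EndR_def)
  next
    fix a assume a: "a \<in> carrier K"
    show "\<exists>h\<in>carrier EndR. a = FF h \<one>"
      using MM_End[OF a] FF_MM[OF a] by (auto simp: EndR_def)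
  qed
  show ?thesis using hom bij by (simp add: ring_iso_def)
qed

end

lemma (in ring) eval_zero_last: "set l \<subseteq> carrier R \<Longrightarrow> l \<noteq> [] \<Longrightarrow> eval l \<zero> = last l"
proof (induction l)
  case Nil then show ?case by simp
next
  case (Cons a l)
  show ?case
  proof (cases "l = []")
    case True then show ?thesis using Cons by simp
  next
    case False
    then have "eval l \<zero> = last l" "last l \<in> carrier R" using Cons by auto
    moreover have "\<zero> [^] length l = \<zero>" using False by (simp add: nat_pow_zero)
    ultimately show ?thesis using Cons False by simp
  qed
qed

lemma (in ring) eval_induct:
  assumes x: "x \<in> carrier R" and S: "S \<subseteq> carrier R"
    and q: "\<And>k. k \<in> S \<Longrightarrow> Q k" "Q x" "Q \<zero>" "Q \<one>"
    "\<And>a b. a \<in> carrier R \<Longrightarrow> b \<in> carrier R \<Longrightarrow> Q a \<Longrightarrow> Q b \<Longrightarrow> Q (a \<oplus> b)"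
    "\<And>a b. a \<in> carrier R \<Longrightarrow> b \<in> carrier R \<Longrightarrow> Q a \<Longrightarrow> Q b \<Longrightarrow> Q (a \<otimes> b)"
  shows "set l \<subseteq> S \<Longrightarrow> Q (eval l x)"
proof (induction l)
  case Nil then show ?case using q by simp
next
  case (Cons a l)
  have pw: "Q (x [^] n)" for n :: nat
  proof (induction n)
    case 0 then show ?case using q by simp
  next
    case (Suc n) then show ?case using q(6)[of "x [^] n" x] x q(2) by simp
  qed
  have ac: "a \<in> carrier R" "set l \<subseteq> carrier R" using Cons S by auto
  have "Q (a \<otimes> x [^] length l)" using q(6)[OF ac(1) _ _ pw] q(1) Cons x by simp
  moreover have "Q (eval l x)" using Cons by simp
  ultimately show ?case
    using q(5)[of "a \<otimes> x [^] length l" "eval l x"] ac x eval_in_carrier[OF ac(2) x] by simp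
qed

theorem lemma2p2:
  fixes R :: "'a ring"
    and E0 :: "'v set" and E1 :: "'e set" and r s :: "'e \<Rightarrow> 'v"
    and c :: "'e list" and f :: "'a list"
  assumes "field R"
    and "is_graph E0 E1 r s"
    and "exclusive_cycle E1 r s c"
    and "f \<in> carrier (poly_ring R)"
    and "length f \<ge> 2"
    and "last f = \<one>\<^bsub>R\<^esub>"
    and "pirreducible\<^bsub>R\<^esub> (carrier R) f"
  shows "Vf_End_ring R E0 E1 r s c f \<simeq> Rupt\<^bsub>R\<^esub> (carrier R) f"
proof -
  interpret R: field R by fact
  let ?Kq = "Rupt\<^bsub>R\<^esub> (carrier R) f"
  let ?surj = "R.rupture_surj (carrier R) f"
  have sub: "subfield (carrier R) R" by (rule R.carrier_is_subfield)
  have subr: "subring (carrier R) R" using subfieldE(1)[OF sub] .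
  have fK: "field ?Kq" using R.rupture_is_field_iff_pirreducible[OF sub assms(4)] assms(7) by simp
  interpret UP: domain "poly_ring R" using R.univ_poly_is_domain[OF subr] .
  interpret Hom: ring_hom_ring "poly_ring R" ?Kq ?surj using R.rupture_surj_hom(2)[OF subr assms(4)] .
  interpret Kf: field ?Kq using fK .
  have Xc: "X\<^bsub>R\<^esub> \<in> carrier (poly_ring R)" using R.var_closed(1)[OF subr] .
  have xbar: "xbar R f = ?surj X\<^bsub>R\<^esub>" by (simp add: xbar_def)
  have xbc: "xbar R f \<in> carrier ?Kq" using xbar Hom.hom_closed[OF Xc] by simp
  have pocc: "R.poly_of_const k \<in> carrier (poly_ring R)" if "k \<in> carrier R" for k
    using ring_hom_memE(1)[OF R.canonical_embedding_is_hom[OF subr]] that by simp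
  have Kemb: "Kemb R f k = ?surj (R.poly_of_const k)" for k by (simp add: Kemb_def)
  define Ks where "Ks = Kemb R f ` carrier R"
  have Ksc: "Ks \<subseteq> carrier ?Kq" unfolding Ks_def using Kemb Hom.hom_closed[OF pocc] by auto
  have evq: "?surj q = ring.eval ?Kq (map (?surj \<circ> R.poly_of_const) q) (xbar R f)"
    if q: "q \<in> carrier (poly_ring R)" for q
  proof -
    have "ring.eval ?Kq (map (?surj \<circ> R.poly_of_const) q) (?surj X\<^bsub>R\<^esub>)
        = ?surj (ring.eval (poly_ring R) (map R.poly_of_const q) X\<^bsub>R\<^esub>)"
      using Hom.eval_hom[OF UP.carrier_is_subring Xc R.map_norm_in_poly_ring_carrier[OF subr q]]
      by simp
    also have "\<dots> = ?surj q" using R.eval_rewrite[OF subr q] by simp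
    finally show ?thesis using xbar by simp
  qed
  have one1: "Kemb R f \<one>\<^bsub>R\<^esub> = \<one>\<^bsub>?Kq\<^esub>"
  proof -
    have "R.poly_of_const \<one>\<^bsub>R\<^esub> = \<one>\<^bsub>poly_ring R\<^esub>"
      by (simp add: R.poly_of_const_def univ_poly_one)
    then show ?thesis using Kemb Hom.hom_one by simp
  qed
  have xbnz: "xbar R f \<noteq> \<zero>\<^bsub>?Kq\<^esub>"
  proof
    assume z: "xbar R f = \<zero>\<^bsub>?Kq\<^esub>"
    have "ring.eval ?Kq (map (?surj \<circ> R.poly_of_const) f) (xbar R f) = \<zero>\<^bsub>?Kq\<^esub>"
      using R.polynomial_rupture[OF subr assms(4)] xbar by simp
    moreover have fne: "f \<noteq> []" using assms(5) by auto
    moreover have fset: "set f \<subseteq> carrier R"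
      using assms(4) R.polynomial_incl unfolding sym[OF univ_poly_carrier] by blast
    have "set (map (?surj \<circ> R.poly_of_const) f) \<subseteq> carrier ?Kq"
      using fset Hom.hom_closed[OF pocc] by auto
    then have "ring.eval ?Kq (map (?surj \<circ> R.poly_of_const) f) \<zero>\<^bsub>?Kq\<^esub> = last (map (?surj \<circ> R.poly_of_const) f)"
      using ring.eval_zero_last[OF Hom.S.ring_axioms] fne by simp
    moreover have "last (map (?surj \<circ> R.poly_of_const) f) = \<one>\<^bsub>?Kq\<^esub>"
      using fne assms(6) one1 Kemb by (simp add: last_map)
    ultimately show False using z by simp
  qed
  interpret V: vf ?Kq E0 E1 r s c "xbar R f" Ks
  proof (unfold_locales)
    show "is_cycle E1 r s c" using assms(3) by (simp add: exclusive_cycle_def)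
    show "xbar R f \<in> carrier ?Kq" by fact
    show "xbar R f \<noteq> \<zero>\<^bsub>?Kq\<^esub>" by fact
    show "Ks \<subseteq> carrier ?Kq" by fact
  next
    fix Q a
    assume q: "\<And>k. k \<in> Ks \<Longrightarrow> Q k" "Q (xbar R f)" "Q \<zero>\<^bsub>?Kq\<^esub>" "Q \<one>\<^bsub>?Kq\<^esub>"
      "\<And>a b. a \<in> carrier ?Kq \<Longrightarrow> b \<in> carrier ?Kq \<Longrightarrow> Q a \<Longrightarrow> Q b \<Longrightarrow> Q (a \<oplus>\<^bsub>?Kq\<^esub> b)"
      "\<And>a b. a \<in> carrier ?Kq \<Longrightarrow> b \<in> carrier ?Kq \<Longrightarrow> Q a \<Longrightarrow> Q b \<Longrightarrow> Q (a \<otimes>\<^bsub>?Kq\<^esub> b)"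
      and a: "a \<in> carrier ?Kq"
    obtain q where qc: "q \<in> carrier (poly_ring R)" and aq: "a = ?surj q"
      using a unfolding rupture_def FactRing_def A_RCOSETS_def' by auto
    have qs: "set q \<subseteq> carrier R"
      using qc R.polynomial_incl unfolding sym[OF univ_poly_carrier] by blast
    have "set (map (?surj \<circ> R.poly_of_const) q) \<subseteq> Ks"
      using qs Kemb unfolding Ks_def by auto
    then have "Q (ring.eval ?Kq (map (?surj \<circ> R.poly_of_const) q) (xbar R f))"
      using ring.eval_induct[OF Hom.S.ring_axioms xbc Ksc q] by blast
    then show "Q a" using evq[OF qc] aq by simp
  qed
  have eq: "Vf_End_ring R E0 E1 r s c f = V.EndR"
    apply (simp only: V.EndR_def V.isEnd_def)
    apply (simp add: Vf_End_ring_def Vf_End_def Vf_carrier_def Let_def Ks_def)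
    done
  show ?thesis unfolding is_ring_iso_def eq using V.EndR_iso by blast
qed

end
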